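(* Let $\{K(\cdot\mid\theta):\theta\in\Theta\}$ be a family of probability density functions on a space $X$, let $P_0$ be a probability distribution on $\Theta$, and let $(\theta_j)_{j\ge1}$ be independent and identically distributed with distribution $P_0$, independent of random weight sequences $\mathbf{w_1}=(w_{1j})_{j\ge1}$ and $\mathbf{w_2}=(w_{2j})_{j\ge1}$, where $w_{ij}\ge0$ and $\sum_{j}w_{ij}=1$ for $i=1,2$. Consider the random mixtures $f_i(x)=\sum_{j=1}^\infty w_{ij}\,K(x\mid\theta_j)$, $i=1,2$. Let $\alpha=\mathbb{E}\left\{\int_X K(x\mid\theta_j)^2\,dx\right\}$ and $\beta=\mathbb{E}\left\{\int_X K(x\mid\theta_j)K(x\mid\theta_k)\,dx\right\}$ for $j\neq k$ (these do not depend on $j,k$), and assume $\alpha<\infty$. Then $$\mathbb{E}\left[\,d_2(f_1,f_2)\mid \mathbf{w_1},\mathbf{w_2}\right]=(\alpha-\beta)\sum_{j=1}^\infty (w_{1j}-w_{2j})^2 .$$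
   Context: $d_2(f_1,f_2)=\int_X\left(f_1(x)-f_2(x)\right)^2dx$ (the squared $L_2$ distance, called the $L_2$ distance in the paper). *)

theory Defs
  imports "HOL-Probability.Probability"
begin

definition mixture :: "(nat \<Rightarrow> real) \<Rightarrow> ('x \<Rightarrow> 't \<Rightarrow> real) \<Rightarrow> (nat \<Rightarrow> 't) \<Rightarrow> 'x \<Rightarrow> real" where
  "mixture w K \<theta> x = (\<Sum>j. w j * K x (\<theta> j))"

definition d2 :: "'x measure \<Rightarrow> ('x \<Rightarrow> real) \<Rightarrow> ('x \<Rightarrow> real) \<Rightarrow> ennreal" where
  "d2 M f g = (\<integral>\<^sup>+ x. ennreal ((f x - g x)^2) \<partial>M)"

end

theory Submission
  imports Defs
begin

lemma PiM_reindex_nn: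
  fixes \<sigma> :: "nat \<Rightarrow> nat"
  assumes P0: "prob_space P0" and \<sigma>: "inj \<sigma>"
    and g: "g \<in> borel_measurable (PiM UNIV (\<lambda>_::nat. P0))"
  shows "(\<integral>\<^sup>+\<theta>. g (\<lambda>n. \<theta> (\<sigma> n)) \<partial>PiM UNIV (\<lambda>_. P0)) = (\<integral>\<^sup>+\<theta>. g \<theta> \<partial>PiM UNIV (\<lambda>_. P0))"
proof -
  let ?\<Omega> = "PiM UNIV (\<lambda>_::nat. P0)"
  let ?T = "\<lambda>\<omega>. \<lambda>n\<in>UNIV. \<omega> (\<sigma> n)"
  have T: "?T \<in> measurable ?\<Omega> ?\<Omega>"
    by (intro measurable_restrict measurable_component_singleton) auto
  have D: "distr ?\<Omega> ?\<Omega> ?T = ?\<Omega>"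
    using distr_PiM_reindex[of UNIV "\<lambda>_. P0" \<sigma> UNIV] P0 \<sigma> by simp
  have "(\<integral>\<^sup>+\<theta>. g \<theta> \<partial>?\<Omega>) = (\<integral>\<^sup>+\<theta>. g \<theta> \<partial>distr ?\<Omega> ?\<Omega> ?T)" by (simp only: D)
  also have "\<dots> = (\<integral>\<^sup>+\<theta>. g (?T \<theta>) \<partial>?\<Omega>)"
    by (rule nn_integral_distr[OF T]) (simp add: g)
  finally show ?thesis by (simp add: restrict_def)
qed

lemma wcs:
  fixes p x :: "nat \<Rightarrow> real"
  assumes "\<And>j. j \<in> S \<Longrightarrow> p j \<ge> 0"
  shows "(\<Sum>j\<in>S. p j * x j)^2 \<le> (\<Sum>j\<in>S. p j) * (\<Sum>j\<in>S. p j * (x j)^2)"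
proof -
  have "(\<Sum>j\<in>S. p j * x j) = (\<Sum>j\<in>S. sqrt (p j) * (sqrt (p j) * x j))"
    using assms by (intro sum.cong) (auto simp flip: mult.assoc)
  also have "(\<dots>)^2 \<le> (\<Sum>j\<in>S. (sqrt (p j))^2) * (\<Sum>j\<in>S. (sqrt (p j) * x j)^2)"
    by (rule Cauchy_Schwarz_ineq_sum)
  also have "\<dots> = (\<Sum>j\<in>S. p j) * (\<Sum>j\<in>S. p j * (x j)^2)"
    using assms by (simp add: power_mult_distrib)
  finally show ?thesis .
qed

theorem lemma2:
  fixes M :: "'x measure" and P0 :: "'t measure"
    and K :: "'x \<Rightarrow> 't \<Rightarrow> real"
    and w1 w2 :: "nat \<Rightarrow> real"
  assumes M: "sigma_finite_measure M"
    and P0: "prob_space P0"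
    and K_meas: "(\<lambda>(x, t). K x t) \<in> borel_measurable (M \<Otimes>\<^sub>M P0)"
    and K_nonneg: "\<And>x t. x \<in> space M \<Longrightarrow> t \<in> space P0 \<Longrightarrow> K x t \<ge> 0"
    and K_dens: "\<And>t. t \<in> space P0 \<Longrightarrow> (\<integral>\<^sup>+ x. ennreal (K x t) \<partial>M) = 1"
    and w1_nonneg: "\<And>j. w1 j \<ge> 0" and w1_sum: "w1 sums 1"
    and w2_nonneg: "\<And>j. w2 j \<ge> 0" and w2_sum: "w2 sums 1"
    and alpha_fin:
      "(\<integral>\<^sup>+ (\<theta>::nat \<Rightarrow> 't). (\<integral>\<^sup>+ x. ennreal ((K x (\<theta> 0))^2) \<partial>M) \<partial>(PiM UNIV (\<lambda>_. P0))) < \<infinity>"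
  shows
    "(\<integral>\<^sup>+ \<theta>. d2 M (mixture w1 K \<theta>) (mixture w2 K \<theta>) \<partial>(PiM UNIV (\<lambda>_. P0)))
     = ennreal
        ((enn2real (\<integral>\<^sup>+ (\<theta>::nat \<Rightarrow> 't). (\<integral>\<^sup>+ x. ennreal ((K x (\<theta> 0))^2) \<partial>M) \<partial>(PiM UNIV (\<lambda>_. P0)))
          - enn2real (\<integral>\<^sup>+ (\<theta>::nat \<Rightarrow> 't). (\<integral>\<^sup>+ x. ennreal (K x (\<theta> 0) * K x (\<theta> 1)) \<partial>M) \<partial>(PiM UNIV (\<lambda>_. P0))))
         * (\<Sum>j. (w1 j - w2 j)^2))"
proof -
  define \<Omega> where "\<Omega> = PiM UNIV (\<lambda>_::nat. P0)"
  interpret P0: prob_space P0 by (rule P0)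
  interpret \<Omega>: prob_space \<Omega> unfolding \<Omega>_def by (intro prob_space_PiM P0)
  interpret M: sigma_finite_measure M by (rule M)
  define N where "N = \<Omega> \<Otimes>\<^sub>M M"
  define h where "h j = (\<lambda>z::(nat\<Rightarrow>'t)\<times>'x. K (snd z) (fst z j))" for j
  have h_meas[measurable]: "h j \<in> borel_measurable N" for j
  proof -
    have "(\<lambda>z. (snd z, fst z j)) \<in> measurable N (M \<Otimes>\<^sub>M P0)" unfolding N_def \<Omega>_def by measurable
    from measurable_comp[OF this K_meas] show ?thesis by (simp add: h_def o_def)
  qed
  have h_nonneg: "z \<in> space N \<Longrightarrow> 0 \<le> h j z" for j z
    unfolding N_def h_def \<Omega>_def by (auto simp: space_pair_measure space_PiM intro!: K_nonneg)
  have tonelli: "f \<in> borel_measurable N \<Longrightarrow> (\<integral>\<^sup>+\<theta>. \<integral>\<^sup>+x. f (\<theta>,x) \<partial>M \<partial>\<Omega>) = integral\<^sup>N N f" for f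
    unfolding N_def by (rule M.nn_integral_fst)
  define \<alpha>E where "\<alpha>E = (\<integral>\<^sup>+ (\<theta>::nat \<Rightarrow> 't). (\<integral>\<^sup>+ x. ennreal ((K x (\<theta> 0))^2) \<partial>M) \<partial>\<Omega>)"
  define \<beta>E where "\<beta>E = (\<integral>\<^sup>+ (\<theta>::nat \<Rightarrow> 't). (\<integral>\<^sup>+ x. ennreal (K x (\<theta> 0) * K x (\<theta> 1)) \<partial>M) \<partial>\<Omega>)"
  have nnmeas: "(\<lambda>\<theta>. \<integral>\<^sup>+x. ennreal (K x (\<theta> j) * K x (\<theta> k)) \<partial>M) \<in> borel_measurable \<Omega>" for j k
  proof -
    have "(\<lambda>z. ennreal (h j z * h k z)) \<in> borel_measurable N" by measurable
    from M.borel_measurable_nn_integral_fst[OF this[unfolded N_def]] show ?thesis by (simp add: h_def)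
  qed
  have hh_meas: "(\<lambda>z. ennreal (h j z * h k z)) \<in> borel_measurable N" for j k by measurable
  have m_eq: "(\<integral>\<^sup>+z. ennreal (h j z * h k z) \<partial>N) = (if j = k then \<alpha>E else \<beta>E)" for j k
  proof -
    have "(\<integral>\<^sup>+z. ennreal (h j z * h k z) \<partial>N) = (\<integral>\<^sup>+\<theta>. \<integral>\<^sup>+x. ennreal (K x (\<theta> j) * K x (\<theta> k)) \<partial>M \<partial>\<Omega>)"
      by (subst tonelli[OF hh_meas, symmetric]) (simp add: h_def)
    also have "\<dots> = (if j = k then \<alpha>E else \<beta>E)"
    proof (cases "j = k")
      case True
      have "(\<integral>\<^sup>+\<theta>. \<integral>\<^sup>+x. ennreal (K x (\<theta> j) * K x (\<theta> k)) \<partial>M \<partial>\<Omega>)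
          = (\<integral>\<^sup>+\<theta>. (\<lambda>\<theta>. \<integral>\<^sup>+x. ennreal (K x (\<theta> 0) * K x (\<theta> 0)) \<partial>M) (\<lambda>n. \<theta> (n + j)) \<partial>\<Omega>)"
        using True by simp
      also have "\<dots> = \<alpha>E"
        unfolding \<alpha>E_def \<Omega>_def
        by (subst PiM_reindex_nn[OF P0]) (auto simp: inj_def power2_eq_square nnmeas[unfolded \<Omega>_def])
      finally show ?thesis using True by simp
    next
      case False
      define \<sigma> where "\<sigma> n = (if n = 0 then j else if n = 1 then k else j + k + n + 2)" for n
      have inj: "inj \<sigma>" using False unfolding inj_def \<sigma>_def by auto
      have "(\<integral>\<^sup>+\<theta>. \<integral>\<^sup>+x. ennreal (K x (\<theta> j) * K x (\<theta> k)) \<partial>M \<partial>\<Omega>)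
          = (\<integral>\<^sup>+\<theta>. (\<lambda>\<theta>. \<integral>\<^sup>+x. ennreal (K x (\<theta> 0) * K x (\<theta> 1)) \<partial>M) (\<lambda>n. \<theta> (\<sigma> n)) \<partial>\<Omega>)"
        by (simp add: \<sigma>_def)
      also have "\<dots> = \<beta>E"
        unfolding \<beta>E_def \<Omega>_def
        by (subst PiM_reindex_nn[OF P0 inj]) (auto simp: nnmeas[unfolded \<Omega>_def])
      finally show ?thesis using False by simp
    qed
    finally show ?thesis .
  qed
  have \<alpha>_fin: "\<alpha>E < \<infinity>" using alpha_fin unfolding \<alpha>E_def \<Omega>_def .
  define A where "A = enn2real \<alpha>E"
  define B where "B = enn2real \<beta>E"
  have int_sq: "integrable N (\<lambda>z. h j z * h j z)" for j
  proof (rule integrableI_bounded)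
    have "(\<integral>\<^sup>+z. ennreal (norm (h j z * h j z)) \<partial>N) = \<alpha>E"
      using m_eq[of j j] by simp
    then show "(\<integral>\<^sup>+z. ennreal (norm (h j z * h j z)) \<partial>N) < \<infinity>" using \<alpha>_fin by simp
  qed simp
  have int_prod: "integrable N (\<lambda>z. h j z * h k z)" for j k
  proof (rule Bochner_Integration.integrable_bound[OF Bochner_Integration.integrable_add[OF int_sq[of j] int_sq[of k]]])
    show "AE z in N. norm (h j z * h k z) \<le> norm (h j z * h j z + h k z * h k z)"
    proof (rule AE_I2)
      fix z
      have "\<bar>h j z * h k z\<bar> \<le> h j z * h j z + h k z * h k z"
      proof -
        have 1: "0 \<le> (\<bar>h j z\<bar> - \<bar>h k z\<bar>)^2" by simp
        have 2: "\<bar>h j z\<bar> * \<bar>h j z\<bar> = h j z * h j z" "\<bar>h k z\<bar> * \<bar>h k z\<bar> = h k z * h k z" by simp_all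
        have 3: "0 \<le> \<bar>h j z\<bar> * \<bar>h k z\<bar>" by simp
        have 4: "2 * (\<bar>h j z\<bar> * \<bar>h k z\<bar>) \<le> h j z * h j z + h k z * h k z"
          using 1 2 by (simp add: power2_eq_square algebra_simps)
        show ?thesis unfolding abs_mult using 3 4 by linarith
      qed
      then show "norm (h j z * h k z) \<le> norm (h j z * h j z + h k z * h k z)" by simp
    qed
  qed simp
  have R: "integral\<^sup>L N (\<lambda>z. h j z * h k z) = (if j = k then A else B)" for j k
  proof -
    have "integral\<^sup>L N (\<lambda>z. h j z * h k z) = enn2real (\<integral>\<^sup>+z. ennreal (h j z * h k z) \<partial>N)"
      by (rule integral_eq_nn_integral) (auto intro!: AE_I2 mult_nonneg_nonneg h_nonneg)
    then show ?thesis using m_eq[of j k] by (simp add: A_def B_def)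
  qed
  define a where "a j = w1 j + w2 j" for j
  define c where "c j = w1 j - w2 j" for j
  have a_nonneg: "0 \<le> a j" for j using w1_nonneg[of j] w2_nonneg[of j] by (simp add: a_def)
  have "a sums (1 + 1)" unfolding a_def by (intro sums_add w1_sum w2_sum)
  then have a_sums: "a sums 2" by simp
  have "c sums (1 - 1)" unfolding c_def by (intro sums_diff w1_sum w2_sum)
  then have c_sums: "c sums 0" by simp
  have a_summ: "summable a" and a_suminf: "suminf a = 2"
    using a_sums by (auto simp: sums_iff)
  have w1_le: "w1 j \<le> 1" for j
    using sum_le_suminf[of w1 "{j}"] w1_sum w1_nonneg by (auto simp: sums_iff)
  have w2_le: "w2 j \<le> 1" for j
    using sum_le_suminf[of w2 "{j}"] w2_sum w2_nonneg by (auto simp: sums_iff)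
  have c_abs: "\<bar>c j\<bar> \<le> a j" "\<bar>c j\<bar> \<le> 1" for j
    using w1_nonneg[of j] w2_nonneg[of j] w1_le[of j] w2_le[of j] by (auto simp: a_def c_def)
  have c2_summ: "summable (\<lambda>j. (c j)^2)"
  proof (rule summable_comparison_test[OF _ a_summ])
    show "\<exists>N. \<forall>n\<ge>N. norm ((c n)^2) \<le> a n"
    proof (intro exI allI impI)
      fix n :: nat
      have "(c n)^2 = \<bar>c n\<bar> * \<bar>c n\<bar>" by (simp add: power2_eq_square)
      also have "\<dots> \<le> 1 * \<bar>c n\<bar>" by (intro mult_right_mono c_abs) simp
      finally show "norm ((c n)^2) \<le> a n" using c_abs[of n] by simp
    qed
  qed
  have h1_int: "(\<integral>\<^sup>+z. ennreal (h j z) \<partial>N) = 1" for j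
  proof -
    have hm: "(\<lambda>z. ennreal (h j z)) \<in> borel_measurable N" by measurable
    have "(\<integral>\<^sup>+z. ennreal (h j z) \<partial>N) = (\<integral>\<^sup>+\<theta>. \<integral>\<^sup>+x. ennreal (K x (\<theta> j)) \<partial>M \<partial>\<Omega>)"
      by (subst tonelli[OF hm, symmetric]) (simp add: h_def)
    also have "\<dots> = (\<integral>\<^sup>+\<theta>. 1 \<partial>\<Omega>)"
      by (rule nn_integral_cong) (auto simp: \<Omega>_def space_PiM intro!: K_dens)
    also have "\<dots> = 1" by (simp add: \<Omega>.emeasure_space_1)
    finally show ?thesis .
  qed
  define S1 where "S1 z = (\<Sum>j. ennreal (a j * h j z))" for z
  define S2 where "S2 z = (\<Sum>j. ennreal (a j * (h j z)^2))" for z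
  have S1_meas[measurable]: "S1 \<in> borel_measurable N" unfolding S1_def by measurable
  have S2_meas[measurable]: "S2 \<in> borel_measurable N" unfolding S2_def by measurable
  have S1_int: "integral\<^sup>N N S1 = ennreal 2"
  proof -
    have "integral\<^sup>N N S1 = (\<Sum>j. \<integral>\<^sup>+z. ennreal (a j * h j z) \<partial>N)"
      unfolding S1_def by (rule nn_integral_suminf) measurable
    also have "\<dots> = (\<Sum>j. ennreal (a j))"
      by (simp add: ennreal_mult'[OF a_nonneg] nn_integral_cmult h1_int)
    also have "\<dots> = ennreal 2"
      using suminf_ennreal2[OF a_nonneg a_summ] a_suminf by simp
    finally show ?thesis .
  qed
  have S2_int: "integral\<^sup>N N S2 = ennreal 2 * \<alpha>E"
  proof -
    have "integral\<^sup>N N S2 = (\<Sum>j. \<integral>\<^sup>+z. ennreal (a j * (h j z)^2) \<partial>N)"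
      unfolding S2_def by (rule nn_integral_suminf) measurable
    also have "\<dots> = (\<Sum>j. ennreal (a j) * \<alpha>E)"
      using m_eq by (simp add: ennreal_mult'[OF a_nonneg] nn_integral_cmult power2_eq_square)
    also have "\<dots> = ennreal 2 * \<alpha>E"
      using suminf_ennreal2[OF a_nonneg a_summ] a_suminf by simp
    finally show ?thesis .
  qed
  have AE_good: "AE z in N. S1 z \<noteq> \<infinity> \<and> S2 z \<noteq> \<infinity>"
  proof -
    have "AE z in N. S1 z \<noteq> \<infinity>" by (rule nn_integral_PInf_AE) (simp_all add: S1_int)
    moreover have "AE z in N. S2 z \<noteq> \<infinity>"
      by (rule nn_integral_PInf_AE) (use \<alpha>_fin in \<open>simp_all add: S2_int ennreal_mult_eq_top_iff\<close>)
    ultimately show ?thesis by eventually_elim simp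
  qed
  define G where "G z = (\<Sum>j. w1 j * h j z) - (\<Sum>j. w2 j * h j z)" for z
  define Gn where "Gn n z = (\<Sum>j<n. c j * h j z)" for n z
  define W where "W z = 2 * (\<Sum>j. a j * (h j z)^2)" for z
  have G_meas[measurable]: "G \<in> borel_measurable N" unfolding G_def by measurable
  have Gn_meas[measurable]: "Gn n \<in> borel_measurable N" for n unfolding Gn_def by measurable
  have W_meas[measurable]: "W \<in> borel_measurable N" unfolding W_def by measurable
  have good: "(\<lambda>n. (Gn n z)^2) \<longlonglongrightarrow> (G z)^2 \<and> (\<forall>n. norm ((Gn n z)^2) \<le> W z) \<and> 0 \<le> W z \<and> ennreal (W z) = 2 * S2 z"
    if z: "z \<in> space N" and f1: "S1 z \<noteq> \<infinity>" and f2: "S2 z \<noteq> \<infinity>" for z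
  proof -
    have hn: "0 \<le> h j z" for j using h_nonneg[OF z] .
    have sa: "summable (\<lambda>j. a j * h j z)"
      using f1 unfolding S1_def by (intro summable_suminf_not_top) (auto intro: mult_nonneg_nonneg a_nonneg hn simp: top_ennreal.rep_eq)
    have sb: "summable (\<lambda>j. a j * (h j z)^2)"
      using f2 unfolding S2_def by (intro summable_suminf_not_top) (auto intro: mult_nonneg_nonneg a_nonneg hn)
    have s1: "summable (\<lambda>j. w1 j * h j z)"
    proof (rule summable_comparison_test[OF _ sa])
      show "\<exists>N. \<forall>n\<ge>N. norm (w1 n * h n z) \<le> a n * h n z"
        using w1_nonneg w2_nonneg hn by (auto simp: a_def intro!: mult_right_mono)
    qed
    have s2: "summable (\<lambda>j. w2 j * h j z)"
    proof (rule summable_comparison_test[OF _ sa])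
      show "\<exists>N. \<forall>n\<ge>N. norm (w2 n * h n z) \<le> a n * h n z"
        using w1_nonneg w2_nonneg hn by (auto simp: a_def intro!: mult_right_mono)
    qed
    have Gn_eq: "Gn n z = (\<Sum>j<n. w1 j * h j z) - (\<Sum>j<n. w2 j * h j z)" for n
      by (simp add: Gn_def c_def left_diff_distrib sum_subtractf)
    have "(\<lambda>n. Gn n z) \<longlonglongrightarrow> G z"
      unfolding Gn_eq G_def by (intro tendsto_diff summable_LIMSEQ s1 s2)
    then have lim: "(\<lambda>n. (Gn n z)^2) \<longlonglongrightarrow> (G z)^2" by (intro tendsto_power)
    have W_nonneg: "0 \<le> W z"
      unfolding W_def using sb by (auto intro!: suminf_nonneg mult_nonneg_nonneg a_nonneg)
    have bound: "norm ((Gn n z)^2) \<le> W z" for n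
    proof -
      have "\<bar>Gn n z\<bar> \<le> (\<Sum>j<n. \<bar>c j\<bar> * h j z)"
        unfolding Gn_def using hn by (auto intro!: order_trans[OF sum_abs] sum_mono simp: abs_mult)
      then have "\<bar>Gn n z\<bar>^2 \<le> (\<Sum>j<n. \<bar>c j\<bar> * h j z)^2"
        by (intro power_mono) auto
      also have "\<dots> \<le> (\<Sum>j<n. \<bar>c j\<bar>) * (\<Sum>j<n. \<bar>c j\<bar> * (h j z)^2)"
        by (rule wcs) simp
      also have "\<dots> \<le> 2 * (\<Sum>j. a j * (h j z)^2)"
      proof (rule mult_mono)
        have "(\<Sum>j<n. \<bar>c j\<bar>) \<le> (\<Sum>j<n. a j)" by (intro sum_mono c_abs)
        also have "\<dots> \<le> suminf a" by (intro sum_le_suminf a_summ) (auto intro: a_nonneg)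
        finally show "(\<Sum>j<n. \<bar>c j\<bar>) \<le> 2" using a_suminf by simp
        have "(\<Sum>j<n. \<bar>c j\<bar> * (h j z)^2) \<le> (\<Sum>j<n. a j * (h j z)^2)"
          by (intro sum_mono mult_right_mono c_abs) simp
        also have "\<dots> \<le> (\<Sum>j. a j * (h j z)^2)"
          by (intro sum_le_suminf sb) (auto intro!: a_nonneg mult_nonneg_nonneg)
        finally show "(\<Sum>j<n. \<bar>c j\<bar> * (h j z)^2) \<le> (\<Sum>j. a j * (h j z)^2)" .
        show "0 \<le> (\<Sum>j<n. \<bar>c j\<bar> * (h j z)^2)" by (intro sum_nonneg) simp
        show "0 \<le> (2::real)" by simp
      qed
      finally show ?thesis by (simp add: W_def)
    qed
    have "ennreal (W z) = ennreal 2 * ennreal (\<Sum>j. a j * (h j z)^2)"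
      unfolding W_def by (simp add: ennreal_mult')
    also have "\<dots> = 2 * S2 z"
      unfolding S2_def by (subst suminf_ennreal2[OF _ sb]) (auto intro: mult_nonneg_nonneg a_nonneg)
    finally show ?thesis using lim bound W_nonneg by simp
  qed
  have AE_all: "AE z in N. (\<lambda>n. (Gn n z)^2) \<longlonglongrightarrow> (G z)^2 \<and> (\<forall>n. norm ((Gn n z)^2) \<le> W z) \<and> 0 \<le> W z \<and> ennreal (W z) = 2 * S2 z"
    using AE_good AE_space by eventually_elim (rule good; simp)
  have W_int: "integrable N W"
  proof (rule integrableI_bounded)
    have "(\<integral>\<^sup>+z. ennreal (norm (W z)) \<partial>N) = (\<integral>\<^sup>+z. 2 * S2 z \<partial>N)"
    proof (rule nn_integral_cong_AE)
      show "AE z in N. ennreal (norm (W z)) = 2 * S2 z" using AE_all by eventually_elim simp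
    qed
    also have "\<dots> = 2 * (ennreal 2 * \<alpha>E)" by (simp add: nn_integral_cmult S2_int)
    also have "\<dots> < \<infinity>" using \<alpha>_fin by (simp add: ennreal_mult_less_top)
    finally show "(\<integral>\<^sup>+z. ennreal (norm (W z)) \<partial>N) < \<infinity>" .
  qed simp
  have lim_ae: "AE z in N. (\<lambda>n. (Gn n z)^2) \<longlonglongrightarrow> (G z)^2" using AE_all by eventually_elim simp
  have bnd_ae: "AE z in N. norm ((Gn n z)^2) \<le> W z" for n using AE_all by eventually_elim simp
  have G2_int: "integrable N (\<lambda>z. (G z)^2)"
    and lim1: "(\<lambda>n. integral\<^sup>L N (\<lambda>z. (Gn n z)^2)) \<longlonglongrightarrow> integral\<^sup>L N (\<lambda>z. (G z)^2)"
    using integrable_dominated_convergence[OF _ _ W_int lim_ae bnd_ae]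
      integral_dominated_convergence[OF _ _ W_int lim_ae bnd_ae] by simp_all
  have int_Gn: "integral\<^sup>L N (\<lambda>z. (Gn n z)^2) = (A - B) * (\<Sum>j<n. (c j)^2) + B * (\<Sum>j<n. c j)^2" for n
  proof -
    have "integral\<^sup>L N (\<lambda>z. (Gn n z)^2) = integral\<^sup>L N (\<lambda>z. \<Sum>j<n. \<Sum>k<n. c j * c k * (h j z * h k z))"
      by (simp add: Gn_def power2_eq_square sum_product mult_ac)
    also have "\<dots> = (\<Sum>j<n. \<Sum>k<n. c j * c k * integral\<^sup>L N (\<lambda>z. h j z * h k z))"
      by (simp add: Bochner_Integration.integral_sum Bochner_Integration.integrable_sum int_prod)
    also have "\<dots> = (\<Sum>j<n. \<Sum>k<n. c j * c k * B + (if k = j then c j * c k * (A - B) else 0))"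
      by (intro sum.cong refl) (auto simp: R algebra_simps)
    also have "\<dots> = (\<Sum>j<n. \<Sum>k<n. c j * c k * B) + (\<Sum>j<n. c j * c j * (A - B))"
      by (simp add: sum.distrib)
    also have "\<dots> = (A - B) * (\<Sum>j<n. (c j)^2) + B * (\<Sum>j<n. c j)^2"
      by (simp add: power2_eq_square sum_product sum_distrib_left sum_distrib_right mult_ac)
    finally show ?thesis .
  qed
  have "(\<lambda>n. (A - B) * (\<Sum>j<n. (c j)^2) + B * (\<Sum>j<n. c j)^2) \<longlonglongrightarrow> (A - B) * (\<Sum>j. (c j)^2) + B * 0^2"
    using c_sums unfolding sums_def by (intro tendsto_intros summable_LIMSEQ c2_summ)
  then have lim2: "(\<lambda>n. integral\<^sup>L N (\<lambda>z. (Gn n z)^2)) \<longlonglongrightarrow> (A - B) * (\<Sum>j. (c j)^2)"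
    by (simp add: int_Gn)
  have IG: "integral\<^sup>L N (\<lambda>z. (G z)^2) = (A - B) * (\<Sum>j. (c j)^2)"
    using LIMSEQ_unique[OF lim1 lim2] .
  have "(\<integral>\<^sup>+ \<theta>. d2 M (mixture w1 K \<theta>) (mixture w2 K \<theta>) \<partial>\<Omega>) = (\<integral>\<^sup>+\<theta>. \<integral>\<^sup>+x. ennreal ((G (\<theta>, x))^2) \<partial>M \<partial>\<Omega>)"
    by (simp add: d2_def mixture_def G_def h_def)
  also have "\<dots> = (\<integral>\<^sup>+z. ennreal ((G z)^2) \<partial>N)" by (rule tonelli) measurable
  also have "\<dots> = ennreal (integral\<^sup>L N (\<lambda>z. (G z)^2))"
    by (rule nn_integral_eq_integral[OF G2_int]) simp
  also have "\<dots> = ennreal ((A - B) * (\<Sum>j. (w1 j - w2 j)^2))" by (simp add: IG c_def)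
  finally show ?thesis unfolding A_def B_def \<alpha>E_def \<beta>E_def \<Omega>_def .
qed

end
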